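(* Let $G$ be a finite simple connected graph with $m\ge 1$ edges such that $\sum_{e_{uv}\in E}(d_u+d_v)=4m$. Then $G$ is either a cycle (of any order) or a tree having a unique vertex of largest degree, this largest degree being $\Delta=3$. In the latter case the tree has order $n\geq 4$.
   Context: $d_u$ denotes the degree of vertex $u$; the sum is over all edges $e_{uv}$ of $G$, each counted once. *)

theory Defs
  imports Main
begin

definition simple_graph :: "'a set \<Rightarrow> ('a \<Rightarrow> 'a \<Rightarrow> bool) \<Rightarrow> bool" where
  "simple_graph V E \<longleftrightarrow> finite V \<and> (\<forall>u v. E u v \<longrightarrow> u \<in> V \<and> v \<in> V)
     \<and> (\<forall>u v. E u v \<longrightarrow> E v u) \<and> (\<forall>v. \<not> E v v)"

definition edges :: "'a set \<Rightarrow> ('a \<Rightarrow> 'a \<Rightarrow> bool) \<Rightarrow> 'a set set" where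
  "edges V E = {{u, v} | u v. u \<in> V \<and> v \<in> V \<and> E u v}"

definition degree :: "'a set \<Rightarrow> ('a \<Rightarrow> 'a \<Rightarrow> bool) \<Rightarrow> 'a \<Rightarrow> nat" where
  "degree V E v = card {u \<in> V. E v u}"

definition max_degree :: "'a set \<Rightarrow> ('a \<Rightarrow> 'a \<Rightarrow> bool) \<Rightarrow> nat" where
  "max_degree V E = Max (degree V E ` V)"

definition connected_graph :: "'a set \<Rightarrow> ('a \<Rightarrow> 'a \<Rightarrow> bool) \<Rightarrow> bool" where
  "connected_graph V E \<longleftrightarrow> V \<noteq> {} \<and> (\<forall>u\<in>V. \<forall>v\<in>V. E\<^sup>*\<^sup>* u v)"

definition has_cycle :: "'a set \<Rightarrow> ('a \<Rightarrow> 'a \<Rightarrow> bool) \<Rightarrow> bool" where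
  "has_cycle V E \<longleftrightarrow> (\<exists>vs. length vs \<ge> 3 \<and> distinct vs \<and> set vs \<subseteq> V
     \<and> (\<forall>i < length vs. E (vs ! i) (vs ! ((i + 1) mod length vs))))"

definition is_tree :: "'a set \<Rightarrow> ('a \<Rightarrow> 'a \<Rightarrow> bool) \<Rightarrow> bool" where
  "is_tree V E \<longleftrightarrow> connected_graph V E \<and> \<not> has_cycle V E"

definition is_cycle_graph :: "'a set \<Rightarrow> ('a \<Rightarrow> 'a \<Rightarrow> bool) \<Rightarrow> bool" where
  "is_cycle_graph V E \<longleftrightarrow> (\<exists>(n::nat) f. n \<ge> 3 \<and> bij_betw f {..<n} V \<and>
     (\<forall>i<n. \<forall>j<n. E (f i) (f j) \<longleftrightarrow> (j = (i + 1) mod n \<or> i = (j + 1) mod n)))"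

end

theory Submission
  imports Defs
begin


lemma sg_facts:
  assumes "simple_graph V E"
  shows "finite V" "E u v \<Longrightarrow> u \<in> V" "E u v \<Longrightarrow> v \<in> V" "E u v \<Longrightarrow> E v u" "\<not> E v v"
  using assms unfolding simple_graph_def by blast+

lemma edges_finite:
  assumes "simple_graph V E" shows "finite (edges V E)"
proof -
  have "edges V E \<subseteq> Pow V" unfolding edges_def by auto
  thus ?thesis using sg_facts(1)[OF assms] by (meson finite_Pow_iff rev_finite_subset)
qed

lemma card_incident:
  assumes sg: "simple_graph V E" and v: "v \<in> V"
  shows "card {e \<in> edges V E. v \<in> e} = degree V E v"
proof -
  have "bij_betw (\<lambda>u. {v,u}) {u \<in> V. E v u} {e \<in> edges V E. v \<in> e}"
  proof (rule bij_betwI')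
    fix x y assume "x \<in> {u \<in> V. E v u}" "y \<in> {u \<in> V. E v u}"
    then show "({v, x} = {v, y}) = (x = y)" using sg_facts[OF sg] by (metis doubleton_eq_iff)
  next
    fix x assume "x \<in> {u \<in> V. E v u}"
    then show "{v, x} \<in> {e \<in> edges V E. v \<in> e}" using v unfolding edges_def by auto
  next
    fix e assume "e \<in> {e \<in> edges V E. v \<in> e}"
    then obtain a b where e: "e = {a,b}" "a \<in> V" "b \<in> V" "E a b" "v \<in> e" unfolding edges_def by auto
    show "\<exists>x\<in>{u \<in> V. E v u}. e = {v, x}"
    proof (cases "v = a")
      case True then show ?thesis using e by auto
    next
      case False then have "v = b" using e by auto
      then show ?thesis using e sg_facts(4)[OF sg] by auto
    qed
  qed
  then show ?thesis unfolding degree_def by (metis bij_betw_same_card)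
qed

lemma double_count:
  assumes sg: "simple_graph V E"
  shows "(\<Sum>e\<in>edges V E. \<Sum>v\<in>e. g v) = (\<Sum>v\<in>V. (g v :: nat) * degree V E v)"
proof -
  have fin: "finite V" using sg_facts(1)[OF sg] .
  have sub: "\<And>e. e \<in> edges V E \<Longrightarrow> e \<subseteq> V" unfolding edges_def by auto
  have "(\<Sum>e\<in>edges V E. \<Sum>v\<in>e. g v) = (\<Sum>e\<in>edges V E. \<Sum>v\<in>{v\<in>V. v \<in> e}. g v)"
    by (rule sum.cong) (auto dest: sub intro!: sum.cong)
  also have "\<dots> = (\<Sum>v\<in>V. \<Sum>e\<in>{e\<in>edges V E. v \<in> e}. g v)"
    by (rule sum.swap_restrict[OF edges_finite[OF sg] fin])
  also have "\<dots> = (\<Sum>v\<in>V. g v * degree V E v)"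
    by (rule sum.cong) (auto simp: card_incident[OF sg])
  finally show ?thesis .
qed

lemma conn_edges:
  assumes sg: "simple_graph V E" and cn: "connected_graph V E"
  shows "card V \<le> card (edges V E) + 1"
proof -
  obtain r where r: "r \<in> V" using cn unfolding connected_graph_def by auto
  define dist where "dist v = (LEAST k. (E ^^ k) r v)" for v
  have ex: "\<exists>k. (E ^^ k) r v" if "v \<in> V" for v
    using cn r that unfolding connected_graph_def by (simp add: rtranclp_power)
  have dl: "(E ^^ dist v) r v" if "v \<in> V" for v
    unfolding dist_def using ex[OF that] by (metis LeastI)
  have dle: "dist v \<le> k" if "(E ^^ k) r v" for v k
    unfolding dist_def using that by (rule Least_le)
  have par: "\<exists>u. E u v \<and> dist u + 1 = dist v" if "v \<in> V" "v \<noteq> r" for v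
  proof -
    have d: "(E ^^ dist v) r v" using dl[OF that(1)] .
    then have "dist v \<noteq> 0" using that by (metis relpowp.simps(1))
    then obtain j where j: "dist v = Suc j" using not0_implies_Suc by blast
    with d obtain u where u: "(E ^^ j) r u" "E u v" by (metis relpowp_Suc_E)
    have "dist u \<le> j" using dle[OF u(1)] .
    moreover have "(E ^^ Suc (dist u)) r v" using dl[OF sg_facts(2)[OF sg u(2)]] u(2) by (rule relpowp_Suc_I)
    then have "dist v \<le> Suc (dist u)" by (rule dle)
    ultimately show ?thesis using u j by auto
  qed
  define p where "p v = (SOME u. E u v \<and> dist u + 1 = dist v)" for v
  have pp: "E (p v) v \<and> dist (p v) + 1 = dist v" if "v \<in> V" "v \<noteq> r" for v
    unfolding p_def using par[OF that] by (rule someI_ex)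
  have "inj_on (\<lambda>v. {p v, v}) (V - {r})"
  proof (rule inj_onI)
    fix x y assume x: "x \<in> V - {r}" and y: "y \<in> V - {r}" and eq: "{p x, x} = {p y, y}"
    show "x = y"
    proof (rule ccontr)
      assume "x \<noteq> y"
      then have "x = p y" "y = p x" using eq by (auto simp: doubleton_eq_iff)
      then show False using pp[of x] pp[of y] x y by auto
    qed
  qed
  moreover have "(\<lambda>v. {p v, v}) ` (V - {r}) \<subseteq> edges V E"
    using pp sg_facts[OF sg] unfolding edges_def by blast
  ultimately have "card (V - {r}) \<le> card (edges V E)"
    using card_inj_on_le edges_finite[OF sg] by blast
  then show ?thesis using r sg_facts(1)[OF sg] by simp
qed



lemma rtranclp_sym:
  assumes "\<And>x y. R x y \<Longrightarrow> R y x" and "R\<^sup>*\<^sup>* a b" shows "R\<^sup>*\<^sup>* b a"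
  using assms(2) by induction (auto intro: converse_rtranclp_into_rtranclp assms(1))

lemma cycle_edges:
  assumes sg: "simple_graph V E" and cn: "connected_graph V E" and hc: "has_cycle V E"
  shows "card V \<le> card (edges V E)"
proof -
  obtain vs where vs: "length vs \<ge> 3" "distinct vs" "set vs \<subseteq> V"
     "\<forall>i < length vs. E (vs ! i) (vs ! ((i + 1) mod length vs))"
    using hc unfolding has_cycle_def by blast
  define k where "k = length vs"
  define a where "a = vs ! 0"
  define b where "b = vs ! 1"
  define E' where "E' x y = (E x y \<and> {x,y} \<noteq> {a,b})" for x y
  have neq: "vs ! i \<noteq> vs ! j" if "i < k" "j < k" "i \<noteq> j" for i j
    using vs(2) that unfolding k_def by (simp add: nth_eq_iff_index_eq)
  have sg': "simple_graph V E'"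
    using sg unfolding simple_graph_def E'_def by (auto simp: insert_commute)
  have step: "E' (vs ! j) (vs ! Suc j)" if "1 \<le> j" "Suc j < k" for j
  proof -
    have "E (vs ! j) (vs ! Suc j)" using vs(4) that unfolding k_def
      by (metis Suc_eq_plus1 Suc_lessD mod_less)
    moreover have "vs ! j \<noteq> a" using neq[of j 0] that unfolding a_def by auto
    moreover have "vs ! Suc j \<noteq> a" using neq[of "Suc j" 0] that unfolding a_def by auto
    ultimately show ?thesis unfolding E'_def by (auto simp: doubleton_eq_iff)
  qed
  have path: "E'\<^sup>*\<^sup>* b (vs ! j)" if "1 \<le> j" "j < k" for j
    using that
  proof (induction j)
    case 0 then show ?case by simp
  next
    case (Suc j)
    show ?case
    proof (cases "j = 0")
      case True then show ?thesis unfolding b_def by simp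
    next
      case False
      then have "E'\<^sup>*\<^sup>* b (vs ! j)" using Suc by auto
      then show ?thesis using step[of j] Suc False by (auto intro: rtranclp.rtrancl_into_rtrancl)
    qed
  qed
  have last: "E' (vs ! (k - 1)) a"
  proof -
    have "Suc (k - 1) = k" using vs(1) unfolding k_def by simp
    then have "Suc (k - 1) mod k = 0" by simp
    then have e1: "E (vs ! (k-1)) (vs ! 0)" using vs(4)[rule_format, of "k-1"] vs(1) unfolding k_def
      by simp
    have k3: "k - 1 < k" "0 < k" "k - 1 \<noteq> 0" "k - 1 \<noteq> 1" "1 < k" using vs(1) unfolding k_def by auto
    have "vs ! (k-1) \<noteq> a" using neq[OF k3(1) k3(2) k3(3)] unfolding a_def .
    moreover have "vs ! (k-1) \<noteq> b" using neq[OF k3(1) k3(5) k3(4)] unfolding b_def .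
    ultimately show ?thesis using e1 unfolding E'_def a_def by (auto simp: doubleton_eq_iff)
  qed
  have kk: "1 \<le> k - 1" "k - 1 < k" using vs(1) unfolding k_def by auto
  have ba: "E'\<^sup>*\<^sup>* b a" using path[OF kk] last
    by (rule rtranclp.rtrancl_into_rtrancl)
  have symE': "\<And>x y. E' x y \<Longrightarrow> E' y x" using sg' sg_facts by metis
  have ab: "E'\<^sup>*\<^sup>* a b" using rtranclp_sym[OF symE' ba] .
  have lift: "E'\<^sup>*\<^sup>* u v" if "E\<^sup>*\<^sup>* u v" for u v
    using that
  proof induction
    case base then show ?case by simp
  next
    case (step y z)
    show ?case
    proof (cases "{y,z} = {a,b}")
      case False then show ?thesis using step unfolding E'_def
        by (auto intro: rtranclp.rtrancl_into_rtrancl)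
    next
      case True
      then have "E'\<^sup>*\<^sup>* y z" using ab ba by (auto simp: doubleton_eq_iff)
      then show ?thesis using step by (auto intro: rtranclp_trans)
    qed
  qed
  have cn': "connected_graph V E'" using cn lift unfolding connected_graph_def by blast
  have vne: "vs \<noteq> []" using vs(1) by (cases vs) auto
  have Eab: "E a b" using vs(4)[rule_format, of 0] vs(1) vne unfolding a_def b_def by auto
  have ed: "edges V E' = edges V E - {{a,b}}"
    unfolding edges_def E'_def by auto
  have "{a,b} \<in> edges V E" using Eab sg_facts[OF sg] unfolding edges_def by blast
  then have "card (edges V E') + 1 = card (edges V E)"
    unfolding ed using edges_finite[OF sg]
    by (metis Suc_eq_plus1 card_Suc_Diff1)
  then show ?thesis using conn_edges[OF sg' cn'] by simp
qed



fun wk :: "('a \<Rightarrow> 'a \<Rightarrow> bool) \<Rightarrow> 'a \<Rightarrow> 'a \<Rightarrow> nat \<Rightarrow> 'a" where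
  "wk E a b 0 = a"
| "wk E a b (Suc 0) = b"
| "wk E a b (Suc (Suc i)) = (SOME z. E (wk E a b (Suc i)) z \<and> z \<noteq> wk E a b i)"

lemma deg2_other:
  assumes sg: "simple_graph V E" and v: "v \<in> V" and d: "degree V E v = 2"
  shows "\<exists>z. E v z \<and> z \<noteq> x"
proof (rule ccontr)
  assume "\<not> ?thesis"
  then have "{u \<in> V. E v u} \<subseteq> {x}" by auto
  then have "card {u \<in> V. E v u} \<le> card {x}" by (intro card_mono) auto
  then show False using d unfolding degree_def by simp
qed

lemma deg2_two:
  assumes sg: "simple_graph V E" and v: "v \<in> V" and d: "degree V E v = 2"
    and "E v x" "E v y" "x \<noteq> y" "E v z"
  shows "z = x \<or> z = y"
proof (rule ccontr)
  assume nz: "\<not> (z = x \<or> z = y)"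
  then have "{x,y,z} \<subseteq> {u \<in> V. E v u}" using assms sg_facts[OF sg] by auto
  moreover have "card {x,y,z} = 3" using nz assms by auto
  moreover have "finite {u \<in> V. E v u}" using sg_facts(1)[OF sg] by simp
  ultimately have "card {x,y,z} \<le> degree V E v" unfolding degree_def using card_mono by blast
  then have "3 \<le> degree V E v" using \<open>card {x,y,z} = 3\<close> by simp
  then show False using d by simp
qed

lemma two_reg_cycle:
  assumes sg: "simple_graph V E" and cn: "connected_graph V E"
    and d2: "\<forall>v\<in>V. degree V E v = 2"
  shows "is_cycle_graph V E"
proof -
  obtain a where a: "a \<in> V" using cn unfolding connected_graph_def by auto
  obtain b where ab: "E a b" using deg2_other[OF sg a] d2 a by blast
  define w where "w = wk E a b"
  have wE: "E (w i) (w (Suc i))" for i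
  proof (induction i)
    case 0 then show ?case using ab unfolding w_def by simp
  next
    case (Suc i)
    have "w (Suc i) \<in> V" using Suc sg_facts[OF sg] by blast
    then have "\<exists>z. E (w (Suc i)) z \<and> z \<noteq> w i" using deg2_other[OF sg] d2 by blast
    then show ?case unfolding w_def by simp (rule someI2_ex, auto)
  qed
  have wne: "w (Suc (Suc i)) \<noteq> w i" for i
  proof -
    have "w (Suc i) \<in> V" using wE sg_facts[OF sg] by blast
    then have "\<exists>z. E (w (Suc i)) z \<and> z \<noteq> w i" using deg2_other[OF sg] d2 by blast
    then show ?thesis unfolding w_def by simp (rule someI2_ex, auto)
  qed
  have wV: "w i \<in> V" for i using wE sg_facts[OF sg] by blast
  have wEs: "E (w (Suc i)) (w i)" for i using wE sg_facts[OF sg] by blast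
  define n where "n = card V"
  have fin: "finite V" using sg_facts(1)[OF sg] .
  have "\<not> inj_on w {..n}"
  proof
    assume "inj_on w {..n}"
    then have c: "card (w ` {..n}) = Suc n" by (simp add: card_image)
    have "w ` {..n} \<subseteq> V" using wV by auto
    then have "card (w ` {..n}) \<le> n" unfolding n_def by (rule card_mono[OF fin])
    then show False using c by simp
  qed
  then obtain x y where xy: "x \<noteq> y" "w x = w y" unfolding inj_on_def by blast
  have exk: "\<exists>k j. j < k \<and> w j = w k"
  proof (cases "x < y")
    case True then show ?thesis using xy by blast
  next
    case False then have "y < x" using xy by simp
    then show ?thesis using xy by metis
  qed
  define P where "P k = (\<exists>j<k. w j = w k)" for k
  define k where "k = (LEAST k. P k)"
  obtain k0 j0 where "j0 < k0" "w j0 = w k0" using exk by blast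
  then have "P k0" unfolding P_def by blast
  then have Pk: "P k" unfolding k_def by (rule LeastI)
  have inj: "inj_on w {..<k}"
  proof (rule inj_onI)
    fix x y assume x: "x \<in> {..<k}" and y: "y \<in> {..<k}" and eq: "w x = w y"
    show "x = y"
    proof (rule ccontr)
      assume "x \<noteq> y"
      then have "P (max x y)"
      proof (cases "x < y")
        case True then show ?thesis unfolding P_def using eq by (auto simp: max_def)
      next
        case False then have "y < x" using \<open>x \<noteq> y\<close> by simp
        then show ?thesis unfolding P_def using eq by (auto simp: max_def)
      qed
      then have "k \<le> max x y" unfolding k_def by (rule Least_le)
      then show False using x y by auto
    qed
  qed
  obtain j where j: "j < k" "w j = w k" using Pk unfolding P_def by blast
  have irr: "\<not> E x x" for x using sg_facts[OF sg] by blast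
  have j0: "j = 0"
  proof (rule ccontr)
    assume "j \<noteq> 0"
    then obtain i where i: "j = Suc i" using not0_implies_Suc by blast
    have "k \<noteq> Suc j" using wE[of j] j irr by auto
    moreover have "k \<noteq> Suc (Suc j)" using wne[of j] j by auto
    ultimately have k3: "Suc (Suc j) < k" using j by auto
    have kk: "Suc (k-1) = k" "k - 1 < k" "i < k" "Suc j < k" using k3 i by auto
    have "E (w j) (w (k - 1))" using wEs[of "k-1"] kk(1) j(2) by simp
    moreover have "E (w j) (w i)" using wEs[of i] i by simp
    moreover have "E (w j) (w (Suc j))" using wE[of j] .
    moreover have "w i \<noteq> w (Suc j)" using inj_onD[OF inj, of i "Suc j"] kk i by auto
    ultimately have "w (k-1) = w i \<or> w (k-1) = w (Suc j)"
      using deg2_two[OF sg wV] d2 wV by blast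
    moreover have "k - 1 \<noteq> i" "k - 1 \<noteq> Suc j" using k3 i by auto
    ultimately show False using inj_onD[OF inj, of "k-1" i] inj_onD[OF inj, of "k-1" "Suc j"] kk by auto
  qed
  have wk0: "w k = a" using j j0 unfolding w_def by simp
  have k3: "3 \<le> k"
  proof -
    have "k \<noteq> 0" using j by auto
    moreover have "k \<noteq> 1" using wk0 wE[of 0] irr unfolding w_def by auto
    moreover have "k \<noteq> 2" using wk0 wne[of 0] unfolding w_def by (auto simp: numeral_2_eq_2)
    ultimately show ?thesis by linarith
  qed
  define s where "s i = Suc i mod k" for i
  define p where "p i = (if i = 0 then k - 1 else i - 1)" for i
  have sk: "s i < k" "p i < k" if "i < k" for i using that k3 unfolding s_def p_def by auto
  have Es: "E (w i) (w (s i))" if "i < k" for i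
  proof (cases "Suc i = k")
    case True then show ?thesis using wE[of i] wk0 unfolding s_def w_def by simp
  next
    case False then show ?thesis using wE[of i] that unfolding s_def by simp
  qed
  have Ep: "E (w i) (w (p i))" if "i < k" for i
  proof (cases "i = 0")
    case True
    have "E (w (k-1)) (w k)" using wE[of "k-1"] k3 by simp
    then show ?thesis using True wk0 sg_facts[OF sg] unfolding p_def w_def by simp
  next
    case False then show ?thesis using wEs[of "i-1"] unfolding p_def by simp
  qed
  have sp: "p i \<noteq> s i" if "i < k" for i using that k3 unfolding p_def s_def
    by (auto simp: mod_if)
  have nb: "y = w (s i) \<or> y = w (p i)" if "i < k" "E (w i) y" for i y
  proof -
    have "w (s i) \<noteq> w (p i)" using inj sk[OF that(1)] sp[OF that(1)] unfolding inj_on_def by auto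
    then show ?thesis using deg2_two[OF sg wV _ Es[OF that(1)] Ep[OF that(1)]] d2 wV that(2) by blast
  qed
  define S where "S = w ` {..<k}"
  have closed: "y \<in> S" if xS: "x \<in> S" and xy: "E x y" for x y
  proof -
    obtain i where i: "i < k" "x = w i" using xS unfolding S_def by auto
    then have "y = w (s i) \<or> y = w (p i)" using nb xy by blast
    then show ?thesis using sk[OF i(1)] unfolding S_def by auto
  qed
  have "w 0 = a" unfolding w_def by simp
  then have aS: "a \<in> S" unfolding S_def using k3 by (metis image_eqI lessThan_iff not_gr0 not_numeral_le_zero)
  have "v \<in> S" if "v \<in> V" for v
  proof -
    have "E\<^sup>*\<^sup>* a v" using cn a that unfolding connected_graph_def by blast
    then show ?thesis by induction (auto intro: aS closed)
  qed
  then have SV: "S = V" unfolding S_def using wV by auto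
  have bij: "bij_betw w {..<k} V" using inj SV unfolding S_def bij_betw_def by simp
  have adj: "E (w i) (w j) \<longleftrightarrow> (j = (i + 1) mod k \<or> i = (j + 1) mod k)" if "i < k" "j < k" for i j
  proof
    assume "E (w i) (w j)"
    then have "w j = w (s i) \<or> w j = w (p i)" using nb that by blast
    then have "j = s i \<or> j = p i" using inj sk that unfolding inj_on_def by auto
    then show "j = (i + 1) mod k \<or> i = (j + 1) mod k"
      using that k3 unfolding s_def p_def by (auto split: if_splits)
  next
    assume "j = (i + 1) mod k \<or> i = (j + 1) mod k"
    then show "E (w i) (w j)" using Es that sg_facts[OF sg] unfolding s_def by auto
  qed
  show ?thesis unfolding is_cycle_graph_def using k3 bij adj by blast
qed



lemma prod_nonneg_int: "0 \<le> ((x::int) - 1) * (x - 2)"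
proof (cases "x \<le> 1")
  case True then show ?thesis by (intro mult_nonpos_nonpos) auto
next
  case False then show ?thesis by (intro mult_nonneg_nonneg) auto
qed

theorem lemma1:
  fixes V :: "'a set" and E :: "'a \<Rightarrow> 'a \<Rightarrow> bool"
  assumes "simple_graph V E"
    and "connected_graph V E"
    and "card (edges V E) \<ge> 1"
    and "(\<Sum>e\<in>edges V E. \<Sum>v\<in>e. degree V E v) = 4 * card (edges V E)"
  shows "is_cycle_graph V E \<or>
         (is_tree V E \<and> (\<exists>!v. v \<in> V \<and> degree V E v = max_degree V E)
          \<and> max_degree V E = 3 \<and> card V \<ge> 4)"
proof -
  note sg = assms(1) and cn = assms(2)
  define d where "d = degree V E"
  define n where "n = card V"
  define m where "m = card (edges V E)"
  have fin: "finite V" using sg_facts(1)[OF sg] .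
  have sq: "(\<Sum>v\<in>V. d v * d v) = 4 * m"
    using assms(4) double_count[OF sg, of "degree V E"] unfolding d_def m_def by simp
  have c2: "card e = 2" if eE: "e \<in> edges V E" for e
  proof -
    obtain u v where "e = {u,v}" "E u v" using eE unfolding edges_def by auto
    moreover then have "u \<noteq> v" using sg_facts(5)[OF sg] by metis
    ultimately show ?thesis by simp
  qed
  have hs: "(\<Sum>v\<in>V. d v) = 2 * m"
  proof -
    have "(\<Sum>v\<in>V. d v) = (\<Sum>e\<in>edges V E. \<Sum>v\<in>e. (1::nat))"
      using double_count[OF sg, of "\<lambda>_. 1"] unfolding d_def by simp
    also have "\<dots> = (\<Sum>e\<in>edges V E. 2)" using c2 by (intro sum.cong) auto
    finally show ?thesis unfolding m_def by simp
  qed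
  have nm: "n \<le> m + 1" using conn_edges[OF sg cn] unfolding n_def m_def .
  obtain e0 where "e0 \<in> edges V E" using assms(3) by (metis card.empty ex_in_conv not_one_le_zero)
  then obtain x0 y0 where xy0: "x0 \<in> V" "y0 \<in> V" "E x0 y0" unfolding edges_def by auto
  have dpos: "1 \<le> d v" if v: "v \<in> V" for v
  proof -
    obtain u where u: "u \<in> V" "u \<noteq> v"
      using xy0 sg_facts(5)[OF sg] by (metis)
    have "E\<^sup>*\<^sup>* v u" using cn v u unfolding connected_graph_def by blast
    then obtain z where "E v z" using u(2) by (metis converse_rtranclpE)
    then have "z \<in> {u \<in> V. E v u}" using sg_facts[OF sg] by blast
    then have "{u \<in> V. E v u} \<noteq> {}" by blast
    moreover have "finite {u \<in> V. E v u}" using fin by simp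
    ultimately show ?thesis unfolding d_def degree_def by (simp add: Suc_le_eq card_gt_0_iff)
  qed
  define f where "f v = (int (d v) - 1) * (int (d v) - 2)" for v
  have fnn: "0 \<le> f v" for v unfolding f_def by (rule prod_nonneg_int)
  have sumf: "(\<Sum>v\<in>V. f v) = 2 * int n - 2 * int m"
  proof -
    have "(\<Sum>v\<in>V. f v) = (\<Sum>v\<in>V. int (d v * d v) - 3 * int (d v) + 2)"
      unfolding f_def by (intro sum.cong) (auto simp: algebra_simps)
    also have "\<dots> = int (\<Sum>v\<in>V. d v * d v) - 3 * int (\<Sum>v\<in>V. d v) + 2 * int n"
      unfolding n_def by (simp add: sum.distrib sum_subtractf sum_distrib_left)
    also have "\<dots> = 2 * int n - 2 * int m" using sq hs by simp
    finally show ?thesis .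
  qed
  have "0 \<le> (\<Sum>v\<in>V. f v)" using fnn by (simp add: sum_nonneg)
  then have "m \<le> n" using sumf by simp
  then consider "m = n" | "m + 1 = n" using nm by linarith
  then show ?thesis
  proof cases
    case 1
    have "\<forall>v\<in>V. f v = 0" using sumf 1 fnn fin by (simp add: sum_nonneg_eq_0_iff)
    then have d12: "d v \<le> 2" if "v \<in> V" for v
      using that dpos[OF that] unfolding f_def by (cases "d v \<le> 2") auto
    have "(\<Sum>v\<in>V. 2 - int (d v)) = 2 * int n - int (\<Sum>v\<in>V. d v)"
      unfolding n_def by (simp add: sum_subtractf)
    also have "\<dots> = 0" using hs 1 by simp
    finally have "\<forall>v\<in>V. 2 - int (d v) = 0"
      using fin d12 by (subst sum_nonneg_eq_0_iff[symmetric]) auto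
    then have "\<forall>v\<in>V. degree V E v = 2" unfolding d_def by auto
    then show ?thesis using two_reg_cycle[OF sg cn] by simp
  next
    case 2
    have fle: "f v \<le> 2" if "v \<in> V" for v
      using member_le_sum[of v V f] that fnn fin sumf 2 by simp
    have d3: "d v \<le> 3" if "v \<in> V" for v
    proof (rule ccontr)
      assume "\<not> d v \<le> 3"
      then have "int (d v) - 1 \<ge> 3" "int (d v) - 2 \<ge> 2" by auto
      then have "f v \<ge> 3 * 2" unfolding f_def by (intro mult_mono) auto
      then show False using fle[OF that] by simp
    qed
    have fv: "f v = (if d v = 3 then 2 else 0)" if "v \<in> V" for v
      using d3[OF that] dpos[OF that] unfolding f_def
      by (cases "d v = 1"; cases "d v = 2"; cases "d v = 3") auto
    define T where "T = {v \<in> V. d v = 3}"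
    have "(\<Sum>v\<in>V. f v) = (\<Sum>v\<in>V. if d v = 3 then 2 else 0)" using fv by (rule sum.cong[OF refl])
    also have "\<dots> = 2 * int (card T)" unfolding T_def using fin by (simp add: sum.If_cases Int_def conj_commute)
    finally have "card T = 1" using sumf 2 by simp
    then obtain c where T: "T = {c}" by (metis card_1_singletonE)
    have cV: "c \<in> V" "d c = 3" using T unfolding T_def by auto
    have uniq: "v \<in> V \<and> d v = 3 \<longleftrightarrow> v = c" for v using T unfolding T_def by auto
    have md: "max_degree V E = 3"
    proof -
      have "Max (d ` V) = 3"
        using fin cV d3 by (intro Max_eqI) auto
      then show ?thesis unfolding max_degree_def d_def .
    qed
    have c4: "card V \<ge> 4"
    proof -
      have sub: "insert c {u \<in> V. E c u} \<subseteq> V" using cV by auto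
      have "c \<notin> {u \<in> V. E c u}" using sg_facts(5)[OF sg] by auto
      then have "card (insert c {u \<in> V. E c u}) = 4"
        using fin cV unfolding d_def degree_def by simp
      then show ?thesis using card_mono[OF fin sub] by simp
    qed
    have tree: "is_tree V E"
      unfolding is_tree_def using cn cycle_edges[OF sg cn] 2 unfolding n_def m_def by auto
    show ?thesis using tree md c4 uniq unfolding d_def by auto
  qed
qed

end
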